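(* Let $V$ be a simple Yetter-Drinfeld module over $H=B(n,w,\gamma)$ with $\dim_\Bbbk V=p+1$ for some $p\ge0$, and let $v\in V$ be a standard element of type $(\alpha,\beta,h)$ with $\alpha,\beta\in\Bbbk^*$, $h\in G(H)$. Then: (1) $p+1\le n$; (2) if $p+1<n$, then $y^{p+1}\cdot v=0$; (3) $y^{p+1}\cdot v=0$ if and only if $\alpha^w=\beta^n=1$; (4) $y^{p+1}\cdot v\ne0$ if and only if $\alpha^w=\beta^n\ne1$.
   Context: $\Bbbk$ is an algebraically closed field of characteristic $0$; $n,w$ positive integers, $\gamma$ a primitive $n$-th root of unity. $H=B(n,w,\gamma)$ is the Hopf algebra generated by $x^{\pm1},g,y$ with relations $xx^{-1}=x^{-1}x=1$, $xg=gx$, $xy=yx$, $yg=\gamma gy$, $y^n=1-x^w=1-g^n$, with $\Delta(x)=x\otimes x$, $\Delta(g)=g\otimes g$, $\Delta(y)=y\otimes g+1\otimes y$, $\varepsilon(x)=\varepsilon(g)=1$, $\varepsilon(y)=0$, $S(x)=x^{-1}$, $S(g)=g^{-1}$, $S(y)=-yg^{-1}$; $G(H)=\{g^jx^k\}$. A (left-left) Yetter-Drinfeld module is a left $H$-module, left $H$-comodule $(V,\cdot,\delta)$ with $\delta(h\cdot v)=h_{(1)}v_{(-1)}S(h_{(3)})\otimes h_{(2)}\cdot v_{(0)}$; simple means no nonzero proper Yetter-Drinfeld submodules. A nonzero $v\in V$ is a standard element of type $(\alpha,\beta,h)$ if $h\in G(H)$, $\alpha,\beta\in\Bbbk^*$,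 $x\cdot v=\alpha v$, $g\cdot v=\beta v$, $\delta(v)=h\otimes v$. *)

theory Defs
  imports "HOL-Analysis.Analysis" "HOL-Computational_Algebra.Polynomial"
begin

section \<open>Ground field\<close>

definition alg_closed :: "'k::field itself \<Rightarrow> bool" where
  "alg_closed TYPE('k) \<longleftrightarrow> (\<forall>q::'k poly. 0 < degree q \<longrightarrow> (\<exists>z. poly q z = 0))"

definition primitive_root :: "nat \<Rightarrow> 'k::field \<Rightarrow> bool" where
  "primitive_root n c \<longleftrightarrow> 0 < n \<and> c ^ n = 1 \<and> (\<forall>m. 0 < m \<and> m < n \<longrightarrow> c ^ m \<noteq> 1)"

section \<open>The Hopf algebra H = B(n,w,gamma) in the basis x^k g^j y^i\<close>

text \<open>Basis index (k,j,i) stands for x^k g^j y^i, with k an integer and 0 \<le> j,i < n.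
  Elements of H are finitely supported coefficient functions on basis indices;
  H \<otimes> H and H \<otimes> H \<otimes> H are represented likewise on pairs/triples of indices.\<close>

type_synonym bidx = "int \<times> nat \<times> nat"
type_synonym 'k helt = "bidx \<Rightarrow> 'k"

definition Bset :: "nat \<Rightarrow> bidx set" where
  "Bset n = {(k,j,i). j < n \<and> i < n}"

definition supp :: "('a \<Rightarrow> 'b::zero) \<Rightarrow> 'a set" where
  "supp f = {s. f s \<noteq> 0}"

definition bel :: "bidx \<Rightarrow> 'k::zero_neq_one helt" where
  "bel t = (\<lambda>s. if s = t then 1 else 0)"

text \<open>nrm n w (k,j,i) is the basis expansion of x^k g^j y^i for arbitrary j,i:
  g^n = x^w and y^n = 1 - x^w.\<close>
definition nrm :: "nat \<Rightarrow> nat \<Rightarrow> bidx \<Rightarrow> 'k::comm_ring_1 helt" where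
  "nrm n w t = (case t of (k,j,i) \<Rightarrow>
     (\<lambda>s. \<Sum>m\<le>i div n. of_int ((-1) ^ m * int (i div n choose m)) *
          bel (k + int (w * (j div n + m)), j mod n, i mod n) s))"

text \<open>Product of basis elements, using y g = gamma g y and central x.\<close>
definition bmul :: "nat \<Rightarrow> nat \<Rightarrow> 'k::comm_ring_1 \<Rightarrow> bidx \<Rightarrow> bidx \<Rightarrow> 'k helt" where
  "bmul n w \<gamma> s s' = (case s of (k,j,i) \<Rightarrow> case s' of (k',j',i') \<Rightarrow>
      (\<lambda>t. \<gamma> ^ (i * j') * nrm n w (k + k', j + j', i + i') t))"

definition hmul :: "nat \<Rightarrow> nat \<Rightarrow> 'k::comm_ring_1 \<Rightarrow> 'k helt \<Rightarrow> 'k helt \<Rightarrow> 'k helt" where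
  "hmul n w \<gamma> a b = (\<lambda>t. \<Sum>s\<in>supp a. \<Sum>s'\<in>supp b. a s * b s' * bmul n w \<gamma> s s' t)"

definition hone :: "'k::comm_ring_1 helt" where
  "hone = bel (0,0,0)"

definition hpow :: "nat \<Rightarrow> nat \<Rightarrow> 'k::comm_ring_1 \<Rightarrow> 'k helt \<Rightarrow> nat \<Rightarrow> 'k helt" where
  "hpow n w \<gamma> a m = ((hmul n w \<gamma> a) ^^ m) hone"

text \<open>Generators as elements of H.\<close>
definition hx :: "nat \<Rightarrow> nat \<Rightarrow> 'k::comm_ring_1 helt" where "hx n w = nrm n w (1,0,0)"
definition hg :: "nat \<Rightarrow> nat \<Rightarrow> 'k::comm_ring_1 helt" where "hg n w = nrm n w (0,1,0)"
definition hy :: "nat \<Rightarrow> nat \<Rightarrow> 'k::comm_ring_1 helt" where "hy n w = nrm n w (0,0,1)"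

text \<open>Antipode on basis elements: S(x^k g^j y^i) = S(y)^i S(g)^j S(x)^k, with
  S(x) = x^{-1}, S(g) = g^{-1} = g^{n-1} x^{-w}, S(y) = - y g^{-1}.\<close>
definition Sg :: "nat \<Rightarrow> nat \<Rightarrow> 'k::comm_ring_1 helt" where
  "Sg n w = nrm n w (- int w, n - 1, 0)"

definition Sy :: "nat \<Rightarrow> nat \<Rightarrow> 'k::comm_ring_1 \<Rightarrow> 'k helt" where
  "Sy n w \<gamma> = (\<lambda>t. - hmul n w \<gamma> (hy n w) (Sg n w) t)"

definition antip :: "nat \<Rightarrow> nat \<Rightarrow> 'k::comm_ring_1 \<Rightarrow> bidx \<Rightarrow> 'k helt" where
  "antip n w \<gamma> b = (case b of (k,j,i) \<Rightarrow>
     hmul n w \<gamma> (hpow n w \<gamma> (Sy n w \<gamma>) i)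
       (hmul n w \<gamma> (hpow n w \<gamma> (Sg n w) j) (nrm n w (-k,0,0))))"

text \<open>Counit on basis elements.\<close>
definition counit :: "bidx \<Rightarrow> 'k::comm_ring_1" where
  "counit b = (case b of (k,j,i) \<Rightarrow> if i = 0 then 1 else 0)"

text \<open>H \<otimes> H.\<close>
definition ten :: "'k::comm_ring_1 helt \<Rightarrow> 'k helt \<Rightarrow> (bidx \<times> bidx \<Rightarrow> 'k)" where
  "ten a b = (\<lambda>(t1,t2). a t1 * b t2)"

definition tmul :: "nat \<Rightarrow> nat \<Rightarrow> 'k::comm_ring_1 \<Rightarrow> (bidx \<times> bidx \<Rightarrow> 'k) \<Rightarrow> (bidx \<times> bidx \<Rightarrow> 'k)
    \<Rightarrow> (bidx \<times> bidx \<Rightarrow> 'k)" where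
  "tmul n w \<gamma> A B = (\<lambda>(t1,t2). \<Sum>s\<in>supp A. \<Sum>s'\<in>supp B.
      A s * B s' * bmul n w \<gamma> (fst s) (fst s') t1 * bmul n w \<gamma> (snd s) (snd s') t2)"

text \<open>Coproduct on basis elements: Delta(x^k g^j y^i) = (x^k g^j \<otimes> x^k g^j) Delta(y)^i,
  Delta(y) = y \<otimes> g + 1 \<otimes> y.\<close>
definition Dy :: "nat \<Rightarrow> nat \<Rightarrow> (bidx \<times> bidx \<Rightarrow> 'k::comm_ring_1)" where
  "Dy n w = (\<lambda>t. ten (hy n w) (hg n w) t + ten hone (hy n w) t)"

definition comult :: "nat \<Rightarrow> nat \<Rightarrow> 'k::comm_ring_1 \<Rightarrow> bidx \<Rightarrow> (bidx \<times> bidx \<Rightarrow> 'k)" where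
  "comult n w \<gamma> b = (case b of (k,j,i) \<Rightarrow>
     tmul n w \<gamma> (ten (nrm n w (k,j,0)) (nrm n w (k,j,0))) ((tmul n w \<gamma> (Dy n w) ^^ i) (ten hone hone)))"

text \<open>(Delta \<otimes> id) Delta on basis elements: coefficient of t1 \<otimes> t2 \<otimes> t3.\<close>
definition comult2 :: "nat \<Rightarrow> nat \<Rightarrow> 'k::comm_ring_1 \<Rightarrow> bidx \<Rightarrow> (bidx \<times> bidx \<times> bidx \<Rightarrow> 'k)" where
  "comult2 n w \<gamma> b = (\<lambda>(t1,t2,t3). \<Sum>s\<in>supp (comult n w \<gamma> b).
      (if snd s = t3 then comult n w \<gamma> b s * comult n w \<gamma> (fst s) (t1,t2) else 0))"

section \<open>Yetter-Drinfeld modules on V = 'k^'d\<close>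

text \<open>A left H-module structure is given by the actions X, Xi, G, Y of the generators
  x, x^{-1}, g, y, subject to the defining relations of H.\<close>
definition hmodule :: "nat \<Rightarrow> nat \<Rightarrow> 'k::field \<Rightarrow>
    ('k^'d \<Rightarrow> 'k^'d) \<Rightarrow> ('k^'d \<Rightarrow> 'k^'d) \<Rightarrow> ('k^'d \<Rightarrow> 'k^'d) \<Rightarrow> ('k^'d \<Rightarrow> 'k^'d) \<Rightarrow> bool" where
  "hmodule n w \<gamma> X Xi G Y \<longleftrightarrow>
     Vector_Spaces.linear (*s) (*s) X \<and> Vector_Spaces.linear (*s) (*s) Xi \<and>
     Vector_Spaces.linear (*s) (*s) G \<and> Vector_Spaces.linear (*s) (*s) Y \<and>
     X \<circ> Xi = id \<and> Xi \<circ> X = id \<and> X \<circ> G = G \<circ> X \<and> X \<circ> Y = Y \<circ> X \<and>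
     (\<forall>v. Y (G v) = \<gamma> *s G (Y v)) \<and>
     (\<forall>v. (Y ^^ n) v = v - (X ^^ w) v) \<and> (X ^^ w) = (G ^^ n)"

text \<open>Action of the basis element x^k g^j y^i.\<close>
definition bact :: "('k^'d \<Rightarrow> 'k^'d) \<Rightarrow> ('k^'d \<Rightarrow> 'k^'d) \<Rightarrow> ('k^'d \<Rightarrow> 'k^'d) \<Rightarrow> ('k^'d \<Rightarrow> 'k^'d)
    \<Rightarrow> bidx \<Rightarrow> 'k^'d \<Rightarrow> 'k^'d" where
  "bact X Xi G Y b = (case b of (k,j,i) \<Rightarrow>
     (if 0 \<le> k then X ^^ nat k else Xi ^^ nat (- k)) \<circ> (G ^^ j) \<circ> (Y ^^ i))"

text \<open>A left H-comodule structure delta(v) = \<Sum>_b b \<otimes> D v b, with D v finitely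
  supported on basis indices.\<close>
definition hcomodule :: "nat \<Rightarrow> nat \<Rightarrow> 'k::field \<Rightarrow> ('k^'d \<Rightarrow> bidx \<Rightarrow> 'k^'d) \<Rightarrow> bool" where
  "hcomodule n w \<gamma> D \<longleftrightarrow>
     (\<forall>b. Vector_Spaces.linear (*s) (*s) (\<lambda>v. D v b)) \<and>
     (\<forall>v. finite (supp (D v)) \<and> supp (D v) \<subseteq> Bset n) \<and>
     (\<forall>v. (\<Sum>b\<in>supp (D v). counit b *s D v b) = v) \<and>
     (\<forall>v t1 t2. (\<Sum>b\<in>supp (D v). comult n w \<gamma> b (t1,t2) *s D v b) = D (D v t1) t2)"

text \<open>Yetter-Drinfeld compatibility
  delta(h.v) = h_(1) v_(-1) S(h_(3)) \<otimes> h_(2).v_(0), for h running over the basis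
  (equivalent to all h by linearity).\<close>
definition yd_module :: "nat \<Rightarrow> nat \<Rightarrow> 'k::field \<Rightarrow>
    ('k^'d \<Rightarrow> 'k^'d) \<Rightarrow> ('k^'d \<Rightarrow> 'k^'d) \<Rightarrow> ('k^'d \<Rightarrow> 'k^'d) \<Rightarrow> ('k^'d \<Rightarrow> 'k^'d)
    \<Rightarrow> ('k^'d \<Rightarrow> bidx \<Rightarrow> 'k^'d) \<Rightarrow> bool" where
  "yd_module n w \<gamma> X Xi G Y D \<longleftrightarrow>
     hmodule n w \<gamma> X Xi G Y \<and> hcomodule n w \<gamma> D \<and>
     (\<forall>b\<in>Bset n. \<forall>v. D (bact X Xi G Y b v) =
        (\<lambda>t. \<Sum>u\<in>supp (comult2 n w \<gamma> b). \<Sum>b'\<in>supp (D v).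
           (comult2 n w \<gamma> b u *
             hmul n w \<gamma> (hmul n w \<gamma> (bel (fst u)) (bel b')) (antip n w \<gamma> (snd (snd u))) t)
           *s bact X Xi G Y (fst (snd u)) (D v b')))"

definition yd_submodule :: "('k::field^'d \<Rightarrow> 'k^'d) \<Rightarrow> ('k^'d \<Rightarrow> 'k^'d) \<Rightarrow> ('k^'d \<Rightarrow> 'k^'d) \<Rightarrow> ('k^'d \<Rightarrow> 'k^'d)
    \<Rightarrow> ('k^'d \<Rightarrow> bidx \<Rightarrow> 'k^'d) \<Rightarrow> ('k^'d) set \<Rightarrow> bool" where
  "yd_submodule X Xi G Y D W \<longleftrightarrow> vec.subspace W \<and>
     X ` W \<subseteq> W \<and> Xi ` W \<subseteq> W \<and> G ` W \<subseteq> W \<and> Y ` W \<subseteq> W \<and>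
     (\<forall>u\<in>W. \<forall>b. D u b \<in> W)"

definition simple_yd :: "nat \<Rightarrow> nat \<Rightarrow> 'k::field \<Rightarrow>
    ('k^'d \<Rightarrow> 'k^'d) \<Rightarrow> ('k^'d \<Rightarrow> 'k^'d) \<Rightarrow> ('k^'d \<Rightarrow> 'k^'d) \<Rightarrow> ('k^'d \<Rightarrow> 'k^'d)
    \<Rightarrow> ('k^'d \<Rightarrow> bidx \<Rightarrow> 'k^'d) \<Rightarrow> bool" where
  "simple_yd n w \<gamma> X Xi G Y D \<longleftrightarrow> yd_module n w \<gamma> X Xi G Y D \<and> (UNIV :: ('k^'d) set) \<noteq> {0} \<and>
     (\<forall>W. yd_submodule X Xi G Y D W \<longrightarrow> W = {0} \<or> W = UNIV)"

text \<open>Group-likes G(H) = {g^j x^k}, i.e. the basis indices (k,j,0) with j < n.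
  A standard element of type (alpha, beta, h) with h = g^j x^k.\<close>
definition standard_elt :: "nat \<Rightarrow> ('k::field^'d \<Rightarrow> 'k^'d) \<Rightarrow> ('k^'d \<Rightarrow> 'k^'d)
    \<Rightarrow> ('k^'d \<Rightarrow> bidx \<Rightarrow> 'k^'d) \<Rightarrow> 'k^'d \<Rightarrow> 'k \<Rightarrow> 'k \<Rightarrow> bidx \<Rightarrow> bool" where
  "standard_elt n X G D v \<alpha> \<beta> h \<longleftrightarrow> v \<noteq> 0 \<and> \<alpha> \<noteq> 0 \<and> \<beta> \<noteq> 0 \<and>
     (\<exists>k j. h = (k, j, 0) \<and> j < n) \<and>
     X v = \<alpha> *s v \<and> G v = \<beta> *s v \<and> D v = (\<lambda>b. if b = h then v else 0)"

end

theory Submission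
  imports Defs
begin

lemma lin_scale: "Vector_Spaces.linear (*s) (*s) (F::'k::field^'d \<Rightarrow> 'k^'d) \<Longrightarrow> F (c *s x) = c *s F x"
  by (simp add: linear_iff_module_hom module_hom.scale)
lemma lin_add: "Vector_Spaces.linear (*s) (*s) (F::'k::field^'d \<Rightarrow> 'k^'d) \<Longrightarrow> F (x + y) = F x + F y"
  by (simp add: linear_iff_module_hom module_hom.add)
lemma lin_diff: "Vector_Spaces.linear (*s) (*s) (F::'k::field^'d \<Rightarrow> 'k^'d) \<Longrightarrow> F (x - y) = F x - F y"
  by (simp add: linear_iff_module_hom module_hom.diff)
lemma lin_zero: "Vector_Spaces.linear (*s) (*s) (F::'k::field^'d \<Rightarrow> 'k^'d) \<Longrightarrow> F 0 = 0"
  by (simp add: linear_iff_module_hom module_hom.zero)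

lemma lin_span_closed:
  fixes F :: "'k::field^'d \<Rightarrow> 'k^'d"
  assumes "Vector_Spaces.linear (*s) (*s) F" "\<And>s. s \<in> S \<Longrightarrow> F s \<in> vec.span S" "x \<in> vec.span S"
  shows "F x \<in> vec.span S"
  using assms(3)
proof (induction rule: vec.span_induct_alt)
  case base then show ?case using lin_zero[OF assms(1)] by (simp add: vec.span_zero)
next
  case (step c x y) then show ?case
    using lin_add[OF assms(1)] lin_scale[OF assms(1)] assms(2)
    by (simp add: vec.span_add vec.span_scale)
qed

lemma lin_pow_closed:
  fixes F :: "'k::field^'d \<Rightarrow> 'k^'d"
  assumes "\<And>x. x \<in> W \<Longrightarrow> F x \<in> W" "x \<in> W"
  shows "(F ^^ m) x \<in> W"
  by (induction m) (use assms in auto)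

lemma lin_pow: "Vector_Spaces.linear (*s) (*s) (F::'k::field^'d \<Rightarrow> 'k^'d) \<Longrightarrow> Vector_Spaces.linear (*s) (*s) (F ^^ m)"
  by (induction m) (auto intro: Vector_Spaces.linear_compose vec.linear_id simp: id_def[symmetric])

lemma eig_claim:
  fixes G :: "'k::field^'d \<Rightarrow> 'k^'d" and u :: "nat \<Rightarrow> 'k^'d" and lam :: "nat \<Rightarrow> 'k"
  assumes lin: "Vector_Spaces.linear (*s) (*s) G" and eig: "\<And>i. i < m \<Longrightarrow> G (u i) = lam i *s u i"
  shows "k \<le> m \<Longrightarrow> z \<in> vec.span (u ` {..<k}) \<Longrightarrow> G z = \<mu> *s z \<Longrightarrow> (\<forall>i<k. \<mu> \<noteq> lam i) \<Longrightarrow> z = 0"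
proof (induction k arbitrary: z)
  case 0 then show ?case by simp
next
  case (Suc k)
  have ins: "u ` {..<Suc k} = insert (u k) (u ` {..<k})" by (simp add: lessThan_Suc)
  from Suc.prems(2) obtain c where zc: "z - c *s u k \<in> vec.span (u ` {..<k})"
    unfolding ins vec.span_insert by auto
  define z' where "z' = z - c *s u k"
  have clos: "G x \<in> vec.span (u ` {..<k})" if "x \<in> vec.span (u ` {..<k})" for x
  proof (rule lin_span_closed[OF lin _ that])
    fix s assume "s \<in> u ` {..<k}"
    then obtain i where "i < k" "s = u i" by auto
    have "u i \<in> u ` {..<k}" using \<open>i < k\<close> by auto
    then have "lam i *s u i \<in> vec.span (u ` {..<k})" by (intro vec.span_scale vec.span_base)
    then show "G s \<in> vec.span (u ` {..<k})" using eig[of i] Suc.prems(1) \<open>s = u i\<close> \<open>i < k\<close> by simp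
  qed
  have z'sp: "z' \<in> vec.span (u ` {..<k})" using zc unfolding z'_def .
  have "G z' - lam k *s z' \<in> vec.span (u ` {..<k})"
    by (rule vec.span_diff[OF clos[OF z'sp] vec.span_scale[OF z'sp]])
  moreover have "G z' - lam k *s z' = (\<mu> - lam k) *s z"
  proof -
    have "G z' = \<mu> *s z - (c * lam k) *s u k"
      unfolding z'_def using lin_diff[OF lin] lin_scale[OF lin] eig[of k] Suc.prems(1,3) by simp
    then have "G z' - lam k *s z' = \<mu> *s z - (c * lam k) *s u k - (lam k *s z - (lam k * c) *s u k)"
      unfolding z'_def by (simp add: vec.scale_right_diff_distrib)
    also have "\<dots> = \<mu> *s z - lam k *s z" by (simp add: mult.commute)
    also have "\<dots> = (\<mu> - lam k) *s z" by (simp add: vec.scale_left_diff_distrib)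
    finally show ?thesis .
  qed
  ultimately have "(\<mu> - lam k) *s z \<in> vec.span (u ` {..<k})" by simp
  then have "inverse (\<mu> - lam k) *s ((\<mu> - lam k) *s z) \<in> vec.span (u ` {..<k})" by (rule vec.span_scale)
  moreover have "inverse (\<mu> - lam k) * (\<mu> - lam k) = 1" using Suc.prems(4) by simp
  ultimately have "z \<in> vec.span (u ` {..<k})" by (simp only: vec.scale_scale vec.scale_one)
  moreover have "k \<le> m" using Suc.prems(1) by simp
  moreover have "\<forall>i<k. \<mu> \<noteq> lam i" using Suc.prems(4) by simp
  ultimately show ?case using Suc.IH Suc.prems(3) by blast
qed

lemma eig_indep:
  fixes G :: "'k::field^'d \<Rightarrow> 'k^'d" and u :: "nat \<Rightarrow> 'k^'d" and lam :: "nat \<Rightarrow> 'k"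
  assumes lin: "Vector_Spaces.linear (*s) (*s) G" and eig: "\<And>i. i < m \<Longrightarrow> G (u i) = lam i *s u i"
    and nz: "\<And>i. i < m \<Longrightarrow> u i \<noteq> 0" and inj: "inj_on lam {..<m}"
  shows "k \<le> m \<Longrightarrow> vec.independent (u ` {..<k}) \<and> card (u ` {..<k}) = k"
proof (induction k)
  case 0 then show ?case by (simp add: vec.independent_empty)
next
  case (Suc k)
  have ins: "u ` {..<Suc k} = insert (u k) (u ` {..<k})" by (simp add: lessThan_Suc)
  have nsp: "u k \<notin> vec.span (u ` {..<k})"
  proof
    assume usp: "u k \<in> vec.span (u ` {..<k})"
    have all: "\<forall>i<k. lam k \<noteq> lam i"
    proof (intro allI impI)
      fix i assume "i < k"
      then show "lam k \<noteq> lam i" using inj_onD[OF inj, of k i] Suc.prems by auto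
    qed
    have km: "k \<le> m" using Suc.prems by simp
    have gk: "G (u k) = lam k *s u k" using eig[of k] Suc.prems by simp
    have "u k = 0" by (rule eig_claim[OF lin eig km usp gk all])
    then show False using nz[of k] Suc.prems by simp
  qed
  have nin: "u k \<notin> u ` {..<k}"
  proof
    assume "u k \<in> u ` {..<k}"
    then have "u k \<in> vec.span (u ` {..<k})" by (rule vec.span_base)
    with nsp show False by simp
  qed
  have "k \<le> m" using Suc.prems by simp
  then have IH: "vec.independent (u ` {..<k})" "card (u ` {..<k}) = k" using Suc.IH by simp_all
  have "vec.independent (u ` {..<Suc k})" unfolding ins by (rule vec.independent_insertI[OF nsp IH(1)])
  moreover have "card (u ` {..<Suc k}) = Suc k" unfolding ins
    using card_insert_disjoint[OF _ nin] IH(2) by simp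
  ultimately show ?case by simp
qed


lemma prim_inj:
  fixes \<gamma> \<beta> :: "'k::field"
  assumes "primitive_root n \<gamma>" "\<beta> \<noteq> 0"
  shows "inj_on (\<lambda>i. \<beta> * inverse \<gamma> ^ i) {..<n}"
proof -
  have g0: "\<gamma> \<noteq> 0" using assms(1) unfolding primitive_root_def by (metis power_0_left zero_neq_one)
  have *: "\<gamma> ^ i \<noteq> \<gamma> ^ j" if "i < j" "j < n" for i j
  proof
    assume eq: "\<gamma> ^ i = \<gamma> ^ j"
    have "\<gamma> ^ j = \<gamma> ^ i * \<gamma> ^ (j - i)" using that by (simp add: power_add[symmetric])
    then have "\<gamma> ^ (j - i) = 1" using eq g0 by simp
    moreover have "0 < j - i" "j - i < n" using that by auto
    ultimately show False using assms(1) unfolding primitive_root_def by blast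
  qed
  show ?thesis
  proof (rule inj_onI)
    fix i j assume ij: "i \<in> {..<n}" "j \<in> {..<n}" and "\<beta> * inverse \<gamma> ^ i = \<beta> * inverse \<gamma> ^ j"
    then have "inverse (\<gamma> ^ i) = inverse (\<gamma> ^ j)" using assms(2) by (simp add: power_inverse)
    then have "\<gamma> ^ i = \<gamma> ^ j" by simp
    then show "i = j" using *[of i j] *[of j i] ij by (metis lessThan_iff linorder_neqE_nat)
  qed
qed

theorem lemma3p6:
  fixes n w p :: nat and \<gamma> \<alpha> \<beta> :: "'k::field_char_0" and h :: bidx
    and X Xi G Y :: "'k^'d \<Rightarrow> 'k^'d" and D :: "'k^'d \<Rightarrow> bidx \<Rightarrow> 'k^'d" and v :: "'k^'d"
  assumes "alg_closed TYPE('k)"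
    and "0 < n" and "0 < w" and "primitive_root n \<gamma>"
    and "simple_yd n w \<gamma> X Xi G Y D"
    and "CARD('d) = p + 1"
    and "standard_elt n X G D v \<alpha> \<beta> h"
  shows "p + 1 \<le> n \<and>
    (p + 1 < n \<longrightarrow> (Y ^^ (p + 1)) v = 0) \<and>
    ((Y ^^ (p + 1)) v = 0 \<longleftrightarrow> \<alpha> ^ w = 1 \<and> \<beta> ^ n = 1) \<and>
    ((Y ^^ (p + 1)) v \<noteq> 0 \<longleftrightarrow> \<alpha> ^ w = \<beta> ^ n \<and> \<beta> ^ n \<noteq> 1)"
proof -
  note n0 = assms(2)
  have mod: "hmodule n w \<gamma> X Xi G Y" and com: "hcomodule n w \<gamma> D"
    and ydc: "\<forall>b\<in>Bset n. \<forall>v. D (bact X Xi G Y b v) =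
        (\<lambda>t. \<Sum>u\<in>supp (comult2 n w \<gamma> b). \<Sum>b'\<in>supp (D v).
           (comult2 n w \<gamma> b u *
             hmul n w \<gamma> (hmul n w \<gamma> (bel (fst u)) (bel b')) (antip n w \<gamma> (snd (snd u))) t)
           *s bact X Xi G Y (fst (snd u)) (D v b'))"
    and smp: "\<forall>W. yd_submodule X Xi G Y D W \<longrightarrow> W = {0} \<or> W = UNIV"
    using assms(5) unfolding simple_yd_def yd_module_def by auto
  have linX: "Vector_Spaces.linear (*s) (*s) X" and linXi: "Vector_Spaces.linear (*s) (*s) Xi"
    and linG: "Vector_Spaces.linear (*s) (*s) G" and linY: "Vector_Spaces.linear (*s) (*s) Y"
    and XiX: "Xi \<circ> X = id" and XY: "X \<circ> Y = Y \<circ> X"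
    and YG: "\<forall>v. Y (G v) = \<gamma> *s G (Y v)" and Yn: "\<forall>v. (Y ^^ n) v = v - (X ^^ w) v"
    and XG: "X ^^ w = G ^^ n"
    using mod unfolding hmodule_def by auto
  have v0: "v \<noteq> 0" and a0: "\<alpha> \<noteq> 0" and b0: "\<beta> \<noteq> 0" and Xv: "X v = \<alpha> *s v"
    and Gv: "G v = \<beta> *s v" and Dv: "D v = (\<lambda>b. if b = h then v else 0)"
    using assms(7) unfolding standard_elt_def by auto
  have g0: "\<gamma> \<noteq> 0" using assms(4) unfolding primitive_root_def by (metis power_0_left zero_neq_one)
  define u where "u i = (Y ^^ i) v" for i
  have u0: "u 0 = v" by (simp add: u_def)
  have uS: "u (Suc i) = Y (u i)" for i by (simp add: u_def)
  have XYz: "X ((Y ^^ i) z) = (Y ^^ i) (X z)" for i z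
  proof (induction i)
    case (Suc i) then show ?case using fun_cong[OF XY, of "(Y ^^ i) z"] by simp
  qed simp
  have Xu: "X (u i) = \<alpha> *s u i" for i
    unfolding u_def XYz Xv by (rule lin_scale[OF lin_pow[OF linY]])
  have Xi_eig: "Xi z = inverse \<alpha> *s z" if "X z = \<alpha> *s z" for z
  proof -
    have "z = Xi (X z)" using fun_cong[OF XiX, of z] by simp
    also have "\<dots> = \<alpha> *s Xi z" using that lin_scale[OF linXi] by simp
    finally have "inverse \<alpha> *s z = inverse \<alpha> *s (\<alpha> *s Xi z)" by simp
    also have "\<dots> = Xi z" using a0 by (simp add: vec.scale_scale)
    finally show ?thesis by simp
  qed
  define lam where "lam i = \<beta> * inverse \<gamma> ^ i" for i
  have Gu: "G (u i) = lam i *s u i" for i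
  proof (induction i)
    case 0 then show ?case by (simp add: u0 Gv lam_def)
  next
    case (Suc i)
    have "\<gamma> *s G (u (Suc i)) = Y (G (u i))" using YG uS by simp
    also have "\<dots> = lam i *s u (Suc i)" using Suc lin_scale[OF linY] uS by simp
    finally have "inverse \<gamma> *s (\<gamma> *s G (u (Suc i))) = inverse \<gamma> *s (lam i *s u (Suc i))" by simp
    then show ?case using g0 by (simp add: vec.scale_scale lam_def mult.commute mult.left_commute)
  qed
  have powe: "(F ^^ k) z = c ^ k *s z" if "Vector_Spaces.linear (*s) (*s) F" "F z = c *s z"
    for F :: "'k^'d \<Rightarrow> 'k^'d" and k z c
  proof (induction k)
    case (Suc k) then show ?case using that lin_scale[OF that(1)] by (simp add: vec.scale_scale mult.commute)
  qed simp
  have un: "u n = (1 - \<alpha> ^ w) *s v"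
    using Yn powe[OF linX Xv, of w] by (simp add: u_def vec.scale_left_diff_distrib)
  have ab: "\<beta> ^ n = \<alpha> ^ w"
  proof -
    have "\<beta> ^ n *s v = \<alpha> ^ w *s v" using powe[OF linX Xv, of w] powe[OF linG Gv, of n] XG by simp
    then have "(\<beta> ^ n - \<alpha> ^ w) *s v = 0" by (simp add: vec.scale_left_diff_distrib)
    then show ?thesis using v0 by simp
  qed
  define W where "W = vec.span (u ` {..<n})"
  have vW: "v \<in> W" unfolding W_def using n0 u0 by (intro vec.span_base) auto
  have inW: "u i \<in> W" if "i < n" for i unfolding W_def using that by (intro vec.span_base) auto
  have closed: "F z \<in> W" if "Vector_Spaces.linear (*s) (*s) F" "\<And>i. i < n \<Longrightarrow> F (u i) \<in> W" "z \<in> W"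
    for F z
    using lin_span_closed[OF that(1) _ that(3)[unfolded W_def]] that(2) unfolding W_def by auto
  have cX: "X z \<in> W" if "z \<in> W" for z
    using closed[OF linX _ that] Xu inW by (simp add: W_def vec.span_scale)
  have cXi: "Xi z \<in> W" if "z \<in> W" for z
    using closed[OF linXi _ that] Xi_eig[OF Xu] inW by (simp add: W_def vec.span_scale)
  have cG: "G z \<in> W" if "z \<in> W" for z
    using closed[OF linG _ that] Gu inW by (simp add: W_def vec.span_scale)
  have cY: "Y z \<in> W" if "z \<in> W" for z
  proof (rule closed[OF linY _ that])
    fix i assume i: "i < n"
    show "Y (u i) \<in> W"
    proof (cases "Suc i < n")
      case True then show ?thesis using inW uS by metis
    next
      case False
      then have "Suc i = n" using i by simp
      then have "Y (u i) = (1 - \<alpha> ^ w) *s v" using un uS by metis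
      then show ?thesis using vec.span_scale[OF vW[unfolded W_def], of "1 - \<alpha> ^ w"] by (simp add: W_def)
    qed
  qed
  have cbact: "bact X Xi G Y b z \<in> W" if "z \<in> W" for b z
  proof -
    obtain k j i where b: "b = (k, j, i)" by (cases b) auto
    have yz: "(Y ^^ i) z \<in> W" by (rule lin_pow_closed[OF cY that])
    have gyz: "(G ^^ j) ((Y ^^ i) z) \<in> W" using lin_pow_closed[of W G, OF cG yz] by simp
    show ?thesis unfolding b bact_def
      using gyz lin_pow_closed[of W X, OF cX gyz] lin_pow_closed[of W Xi, OF cXi gyz] by auto
  qed
  have Dvb: "D v b' \<in> W" for b' using Dv vW by (simp add: W_def vec.span_zero)
  have Du: "D (u i) b \<in> W" if "i < n" for i b
  proof -
    have Bi: "(0, 0, i) \<in> Bset n" using that n0 by (simp add: Bset_def)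
    have "u i = bact X Xi G Y (0, 0, i) v" by (simp add: bact_def u_def)
    then have "D (u i) b = (\<Sum>u\<in>supp (comult2 n w \<gamma> (0, 0, i)). \<Sum>b'\<in>supp (D v).
           (comult2 n w \<gamma> (0, 0, i) u *
             hmul n w \<gamma> (hmul n w \<gamma> (bel (fst u)) (bel b')) (antip n w \<gamma> (snd (snd u))) b)
           *s bact X Xi G Y (fst (snd u)) (D v b'))"
      using ydc Bi by simp
    also have "\<dots> \<in> W" unfolding W_def
      by (intro vec.span_sum vec.span_scale cbact[OF Dvb, unfolded W_def])
    finally show ?thesis .
  qed
  have linD: "Vector_Spaces.linear (*s) (*s) (\<lambda>v. D v b)" for b
  proof -
    have "\<forall>b. Vector_Spaces.linear (*s) (*s) (\<lambda>v. D v b)" using com unfolding hcomodule_def by (elim conjE)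
    then show ?thesis by (rule spec)
  qed
  have cD: "D z b \<in> W" if "z \<in> W" for z b
  proof -
    have "z \<in> vec.span (u ` {..<n})" using that W_def by simp
    then show ?thesis
    proof (induction arbitrary: b rule: vec.span_induct_alt)
      case base then show ?case using lin_zero[OF linD] by (simp add: W_def vec.span_zero)
    next
      case (step c x y)
      then obtain i where "i < n" "x = u i" by auto
      then show ?case using step Du lin_add[OF linD] lin_scale[OF linD]
        by (simp add: W_def vec.span_add vec.span_scale)
    qed
  qed
  have "yd_submodule X Xi G Y D W"
    unfolding yd_submodule_def using cX cXi cG cY cD by (auto simp: W_def vec.subspace_span)
  then have WU: "W = UNIV" using smp vW v0 by blast
  have dimU: "vec.dim (UNIV :: ('k^'d) set) = p + 1" using vec_dim_card[where 'a='k and 'n='d] assms(6) by (simp del: vec.dim_UNIV)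
  have injl: "inj_on lam {..<n}" unfolding lam_def by (rule prim_inj[OF assms(4) b0])
  have uzero: "u (k + i) = 0" if "u i = 0" for i k
    using that lin_zero[OF lin_pow[OF linY, of k]] by (simp add: u_def funpow_add)
  have unz: "u n = 0 \<longleftrightarrow> \<alpha> ^ w = 1"
    unfolding un using v0 vec.scale_eq_0_iff[of "1 - \<alpha> ^ w" v] by auto
  show ?thesis
  proof (cases "\<alpha> ^ w = 1")
    case False
    have nz: "u i \<noteq> 0" if "i < n" for i
    proof
      assume "u i = 0"
      then have "u ((n - i) + i) = 0" by (rule uzero)
      then have "u n = 0" using that by simp
      then show False using unz False by simp
    qed
    have ind: "vec.independent (u ` {..<n}) \<and> card (u ` {..<n}) = n"
      by (rule eig_indep[OF linG Gu nz injl]) auto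
    have "vec.dim W = n" unfolding W_def using ind vec.dim_span_eq_card_independent[of "u ` {..<n}"] by simp
    then have pn: "p + 1 = n" using WU dimU by simp
    have "u n \<noteq> 0" using unz False by simp
    then show ?thesis using pn ab False by (simp add: u_def)
  next
    case True
    have "u n = 0" using unz True by simp
    define m where "m = (LEAST i. u i = 0)"
    have um: "u m = 0" unfolding m_def by (rule LeastI[of _ n]) fact
    have mn: "m \<le> n" unfolding m_def by (rule Least_le) fact
    have nz: "u i \<noteq> 0" if "i < m" for i using not_less_Least[of i "\<lambda>i. u i = 0"] that m_def by simp
    have injm: "inj_on lam {..<m}" using inj_on_subset[OF injl] mn by auto
    have ind: "vec.independent (u ` {..<m}) \<and> card (u ` {..<m}) = m"
      using eig_indep[of G m u lam m, OF linG Gu nz injm] by simp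
    have "u ` {..<n} \<subseteq> vec.span (u ` {..<m})"
    proof
      fix z assume "z \<in> u ` {..<n}"
      then obtain i where "z = u i" by auto
      show "z \<in> vec.span (u ` {..<m})"
      proof (cases "i < m")
        case True then show ?thesis using \<open>z = u i\<close> by (intro vec.span_base) auto
      next
        case False
        then have "u ((i - m) + m) = 0" using um by (intro uzero)
        then show ?thesis using False \<open>z = u i\<close> by (simp add: vec.span_zero)
      qed
    qed
    then have "W \<subseteq> vec.span (u ` {..<m})" unfolding W_def
      by (rule vec.span_minimal) (rule vec.subspace_span)
    then have "vec.span (u ` {..<m}) = UNIV" using WU by auto
    then have "p + 1 = m" using ind vec.dim_span_eq_card_independent dimU by metis
    then show ?thesis using um mn ab True by (simp add: u_def)
  qed
qed

end
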